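(* Let $n\geq1$ and $j\geq0$ be integers. (i) If $n$ is even, then $\widehat{A}_n(q^{j},q)$ is divisible in $\mathbb{Z}[q]$ by $(1+q)^{\lfloor n/2\rfloor}$ when $j$ is even, and by $(1+q)^{\lfloor (n-1)/2\rfloor}$ when $j$ is odd. (ii) If $n$ is odd, then $\widehat{A}_n(q^{j},q)$ is divisible by $(1+q)^{\lfloor n/2\rfloor}$ for all $j\geq0$. In particular, $\widehat{A}_n(1,q)$ is divisible by $(1+q)^{\lfloor n/2\rfloor}$.
   Context: For $\pi=\pi_1\cdots\pi_n\in\mathfrak{S}_n$, $\widehat{D}(\pi)=\{2i:\pi_{2i}<\pi_{2i+1}\}\cup\{2i+1:\pi_{2i+1}>\pi_{2i+2}\}$ (indices in $\{1,\dots,n-1\}$), ${\rm altdes}(\pi)=|\widehat{D}(\pi)|$, ${\rm altmaj}(\pi)=\sum_{i\in\widehat{D}(\pi)}i$, and $\widehat{A}_n(t,q)=\sum_{\pi\in\mathfrak{S}_n}t^{{\rm altdes}(\pi)}q^{{\rm altmaj}(\pi)}$. *)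

theory Defs
  imports "HOL-Combinatorics.Permutations" "HOL-Computational_Algebra.Polynomial"
begin

definition altDes :: "nat \<Rightarrow> (nat \<Rightarrow> nat) \<Rightarrow> nat set" where
  "altDes n p = {i \<in> {1..n-1}. (even i \<and> p i < p (i+1)) \<or> (odd i \<and> p i > p (i+1))}"

definition altdes :: "nat \<Rightarrow> (nat \<Rightarrow> nat) \<Rightarrow> nat" where
  "altdes n p = card (altDes n p)"

definition altmaj :: "nat \<Rightarrow> (nat \<Rightarrow> nat) \<Rightarrow> nat" where
  "altmaj n p = (\<Sum>i\<in>altDes n p. i)"

definition altA :: "nat \<Rightarrow> 'a::comm_ring_1 \<Rightarrow> 'a \<Rightarrow> 'a" where
  "altA n t q = (\<Sum>p\<in>{p. p permutes {1..n}}. t ^ altdes n p * q ^ altmaj n p)"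

end

theory Submission
  imports Defs
begin


definition ins :: "nat \<Rightarrow> nat \<Rightarrow> (nat \<Rightarrow> nat) \<Rightarrow> nat \<Rightarrow> nat" where
  "ins n v p i = (if i \<in> {1..n} then (if p i < v then p i else Suc (p i)) else if i = Suc n then v else i)"

definition del :: "nat \<Rightarrow> (nat \<Rightarrow> nat) \<Rightarrow> nat \<Rightarrow> nat" where
  "del n p i = (if i \<in> {1..n} then (if p i < p (Suc n) then p i else p i - 1) else i)"

lemma perm_facts:
  assumes "p permutes {1..n}"
  shows "\<And>i. i \<in> {1..n} \<Longrightarrow> p i \<in> {1..n}" "\<And>i. i \<notin> {1..n} \<Longrightarrow> p i = i" "inj p"
  using permutes_in_image[OF assms] permutes_not_in[OF assms] permutes_inj[OF assms] by auto

lemma permI: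
  fixes f :: "nat \<Rightarrow> nat" and n :: nat
  assumes "\<And>i. i \<in> {1..n} \<Longrightarrow> f i \<in> {1..n}" "inj_on f {1..n}" "\<And>i. i \<notin> {1..n} \<Longrightarrow> f i = i"
  shows "f permutes {1..n}"
proof (rule bij_imp_permutes)
  have sub: "f ` {1..n} \<subseteq> {1..n}" using assms(1) by auto
  have "f ` {1..n} = {1..n}" by (rule endo_inj_surj[OF _ sub assms(2)]) simp
  then show "bij_betw f {1..n} {1..n}" using assms(2) by (simp add: bij_betw_def)
qed (use assms in auto)

lemma ins_permutes:
  assumes p: "p permutes {1..n}" and v: "v \<in> {1..Suc n}"
  shows "ins n v p permutes {1..Suc n}"
proof (rule permI)
  note pf = perm_facts[OF p]
  show "ins n v p i \<in> {1..Suc n}" if "i \<in> {1..Suc n}" for i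
    using that pf(1)[of i] v by (auto simp: ins_def)
  show "ins n v p i = i" if "i \<notin> {1..Suc n}" for i
    using that by (auto simp: ins_def)
  show "inj_on (ins n v p) {1..Suc n}"
  proof (rule inj_onI)
    fix a b assume a: "a \<in> {1..Suc n}" and b: "b \<in> {1..Suc n}" and e: "ins n v p a = ins n v p b"
    have ne: "p a = p b \<Longrightarrow> a = b" using pf(3) by (simp add: inj_eq)
    show "a = b"
    proof (cases "a = Suc n")
      case True
      then show ?thesis using e b by (auto simp: ins_def split: if_splits)
    next
      case False
      then show ?thesis using e a b ne by (auto simp: ins_def split: if_splits)
    qed
  qed
qed

lemma del_permutes:
  assumes p: "p permutes {1..Suc n}"
  shows "del n p permutes {1..n}"
proof (rule permI)
  note pf = perm_facts[OF p]
  have pv: "p (Suc n) \<in> {1..Suc n}" using pf(1) by auto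
  have neq: "i \<in> {1..n} \<Longrightarrow> p i \<noteq> p (Suc n)" for i using pf(3) by (auto simp: inj_eq)
  show "del n p i \<in> {1..n}" if "i \<in> {1..n}" for i
    using that pf(1)[of i] pv neq[of i] by (auto simp: del_def)
  show "del n p i = i" if "i \<notin> {1..n}" for i
    using that by (auto simp: del_def)
  show "inj_on (del n p) {1..n}"
  proof (rule inj_onI)
    fix a b assume a: "a \<in> {1..n}" and b: "b \<in> {1..n}" and e: "del n p a = del n p b"
    have ne: "p a = p b \<Longrightarrow> a = b" using pf(3) by (simp add: inj_eq)
    show "a = b"
      using e a b ne neq[of a] neq[of b] pf(1)[of a] pf(1)[of b] by (auto simp: del_def split: if_splits)
  qed
qed

lemma del_ins:
  assumes p: "p permutes {1..n}" and v: "v \<in> {1..Suc n}"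
  shows "del n (ins n v p) = p"
proof
  fix i
  note pf = perm_facts[OF p]
  show "del n (ins n v p) i = p i"
    using pf(2)[of i] by (auto simp: del_def ins_def)
qed

lemma ins_del:
  assumes p: "p permutes {1..Suc n}"
  shows "ins n (p (Suc n)) (del n p) = p"
proof
  fix i
  note pf = perm_facts[OF p]
  have neq: "i \<in> {1..n} \<Longrightarrow> p i \<noteq> p (Suc n)" for i using pf(3) by (auto simp: inj_eq)
  show "ins n (p (Suc n)) (del n p) i = p i"
    using pf(2)[of i] pf(1)[of i] neq[of i] by (auto simp: del_def ins_def)
qed

lemma ins_bij:
  assumes v: "v \<in> {1..Suc n}"
  shows "bij_betw (ins n v) {p. p permutes {1..n}} {p. p permutes {1..Suc n} \<and> p (Suc n) = v}"
  apply (rule bij_betw_byWitness[where f'="del n"])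
  using del_ins[OF _ v] ins_del ins_permutes[OF _ v] del_permutes
  by (auto simp: ins_def)

definition W :: "(nat \<Rightarrow> 'a::comm_ring_1) \<Rightarrow> nat \<Rightarrow> (nat \<Rightarrow> nat) \<Rightarrow> 'a" where
  "W x n p = (\<Prod>i\<in>altDes n p. x i)"
definition Hs :: "(nat \<Rightarrow> 'a::comm_ring_1) \<Rightarrow> nat \<Rightarrow> nat \<Rightarrow> 'a" where
  "Hs x n v = (\<Sum>p\<in>{p. p permutes {1..n} \<and> p n = v}. W x n p)"
definition Fs :: "(nat \<Rightarrow> 'a::comm_ring_1) \<Rightarrow> nat \<Rightarrow> 'a" where
  "Fs x n = (\<Sum>p\<in>{p. p permutes {1..n}}. W x n p)"
definition Aw :: "(nat \<Rightarrow> 'a::comm_ring_1) \<Rightarrow> nat \<Rightarrow> 'a" where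
  "Aw x i = (if even i then x i else 1)"
definition Bw :: "(nat \<Rightarrow> 'a::comm_ring_1) \<Rightarrow> nat \<Rightarrow> 'a" where
  "Bw x i = (if even i then 1 else x i)"

lemma altDes_sub: "altDes n p \<subseteq> {1..n-1}"
  by (auto simp: altDes_def)

lemma altDes_ins:
  assumes p: "p permutes {1..n}" and v: "v \<in> {1..Suc n}" and n: "n \<ge> 1"
  shows "altDes (Suc n) (ins n v p) = altDes n p \<union> (if (even n \<and> p n < v) \<or> (odd n \<and> \<not> p n < v) then {n} else {})"
proof -
  have mono: "(if a < v then a else Suc a) < (if b < v then b else Suc b) \<longleftrightarrow> a < b" for a b :: nat
    by auto
  have A: "i \<in> altDes (Suc n) (ins n v p) \<longleftrightarrow> i \<in> altDes n p" if "i \<in> {1..n-1}" for i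
  proof -
    have "i \<in> {1..n}" "Suc i \<in> {1..n}" using that by auto
    then have "ins n v p i < ins n v p (i+1) \<longleftrightarrow> p i < p (i+1)"
         "ins n v p i > ins n v p (i+1) \<longleftrightarrow> p i > p (i+1)"
      using mono[of "p i" "p (i+1)"] mono[of "p (i+1)" "p i"] by (simp_all add: ins_def)
    then show ?thesis using that by (auto simp: altDes_def)
  qed
  have B: "n \<in> altDes (Suc n) (ins n v p) \<longleftrightarrow> (even n \<and> p n < v) \<or> (odd n \<and> \<not> p n < v)"
  proof -
    have "ins n v p n < ins n v p (n+1) \<longleftrightarrow> p n < v" "ins n v p n > ins n v p (n+1) \<longleftrightarrow> \<not> p n < v"
      using n by (auto simp: ins_def)
    then show ?thesis using n by (auto simp: altDes_def)
  qed
  show ?thesis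
  proof (rule set_eqI)
    fix i
    show "i \<in> altDes (Suc n) (ins n v p) \<longleftrightarrow> i \<in> altDes n p \<union> (if (even n \<and> p n < v) \<or> (odd n \<and> \<not> p n < v) then {n} else {})"
    proof (cases "i = n")
      case True
      have "n \<notin> {1..n-1}" by auto
      then have "n \<notin> altDes n p" using altDes_sub[of n p] by blast
      then show ?thesis using B True by auto
    next
      case False
      show ?thesis
      proof (cases "i \<in> {1..n-1}")
        case True
        then show ?thesis using A False by auto
      next
        case F2: False
        then have "i \<notin> altDes (Suc n) (ins n v p)" using False altDes_sub[of "Suc n" "ins n v p"] by auto
        then show ?thesis using F2 False altDes_sub[of n p] by auto
      qed
    qed
  qed
qed

lemma W_ins:
  assumes p: "p permutes {1..n}" and v: "v \<in> {1..Suc n}" and n: "n \<ge> 1"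
  shows "W x (Suc n) (ins n v p) = W x n p * (if p n < v then Aw x n else Bw x n)"
proof -
  have "n \<notin> {1..n-1}" by auto
  then have nn: "n \<notin> altDes n p" using altDes_sub[of n p] by blast
  have fin: "finite (altDes n p)" using altDes_sub[of n p] finite_subset by blast
  show ?thesis
    unfolding W_def altDes_ins[OF p v n]
    using nn fin by (auto simp: Aw_def Bw_def mult.commute)
qed

lemma Hs_rec:
  assumes v: "v \<in> {1..Suc n}" and n: "n \<ge> 1"
  shows "Hs x (Suc n) v = (\<Sum>u\<in>{1..n}. Hs x n u * (if u < v then Aw x n else Bw x n))"
proof -
  let ?S = "{p. p permutes {1..n}}"
  have fin: "finite ?S" by (rule finite_permutations) simp
  have "Hs x (Suc n) v = (\<Sum>p\<in>?S. W x (Suc n) (ins n v p))"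
    unfolding Hs_def using sum.reindex_bij_betw[OF ins_bij[OF v], of "W x (Suc n)"] by simp
  also have "\<dots> = (\<Sum>p\<in>?S. W x n p * (if p n < v then Aw x n else Bw x n))"
    by (intro sum.cong refl) (simp add: W_ins[OF _ v n])
  also have "\<dots> = (\<Sum>u\<in>{1..n}. \<Sum>p\<in>{p \<in> ?S. p n = u}. W x n p * (if p n < v then Aw x n else Bw x n))"
  proof (rule sum.group[symmetric, OF fin])
    show "(\<lambda>p. p n) ` ?S \<subseteq> {1..n}" using n permutes_in_image[of _ "{1..n}" n] by auto
  qed simp
  also have "\<dots> = (\<Sum>u\<in>{1..n}. Hs x n u * (if u < v then Aw x n else Bw x n))"
    unfolding Hs_def sum_distrib_right by (intro sum.cong refl) auto
  finally show ?thesis .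
qed

lemma Fs_Hs:
  assumes n: "n \<ge> 1"
  shows "Fs x n = (\<Sum>u\<in>{1..n}. Hs x n u)"
proof -
  let ?S = "{p. p permutes {1..n}}"
  have fin: "finite ?S" by (rule finite_permutations) simp
  have "Fs x n = (\<Sum>u\<in>{1..n}. \<Sum>p\<in>{p \<in> ?S. p n = u}. W x n p)"
    unfolding Fs_def
  proof (rule sum.group[symmetric, OF fin])
    show "(\<lambda>p. p n) ` ?S \<subseteq> {1..n}" using n permutes_in_image[of _ "{1..n}" n] by auto
  qed simp
  then show ?thesis unfolding Hs_def by simp
qed

lemma Hs_1: "Hs x 1 1 = 1"
proof -
  have "{p. p permutes {1..1::nat} \<and> p 1 = 1} = {id}"
  proof
    show "{id} \<subseteq> {p. p permutes {1..1::nat} \<and> p 1 = 1}" by (auto simp: permutes_id)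
    show "{p. p permutes {1..1::nat} \<and> p 1 = 1} \<subseteq> {id}"
    proof
      fix p assume "p \<in> {p. p permutes {1..1::nat} \<and> p 1 = 1}"
      then have "p permutes {1..1}" "p 1 = 1" by auto
      then have "p i = id i" for i using permutes_not_in[of p "{1..1}" i] by (cases "i = 1") auto
      then show "p \<in> {id}" by auto
    qed
  qed
  moreover have "altDes 1 id = {}" by (auto simp: altDes_def)
  ultimately show ?thesis by (simp add: Hs_def W_def)
qed

definition Pp :: "(nat \<Rightarrow> 'a::comm_ring_1) \<Rightarrow> nat \<Rightarrow> nat \<Rightarrow> 'a" where
  "Pp x m n = (\<Prod>i\<in>{Suc m..<n}. Aw x i - Bw x i)"
definition gg :: "(nat \<Rightarrow> 'a::comm_ring_1) \<Rightarrow> nat \<Rightarrow> 'a" where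
  "gg x m = (if m = 0 then 1 else Bw x m * Fs x m)"

lemma hockey: "(\<Sum>u\<in>{1..<v}. (u-1) choose k) = (v-1) choose (Suc k)"
proof (induction v)
  case 0
  then show ?case by simp
next
  case (Suc v)
  show ?case
  proof (cases "v = 0")
    case True
    then show ?thesis by simp
  next
    case False
    then have "{1..<Suc v} = insert v {1..<v}" by auto
    then have "(\<Sum>u\<in>{1..<Suc v}. (u-1) choose k) = ((v-1) choose k) + (\<Sum>u\<in>{1..<v}. (u-1) choose k)"
      by simp
    also have "\<dots> = ((v-1) choose k) + ((v-1) choose Suc k)" using Suc.IH by simp
    also have "\<dots> = Suc (v-1) choose Suc k" by simp
    also have "Suc (v-1) = Suc v - 1" using False by simp
    finally show ?thesis .
  qed
qed

lemma Pp_Suc: "m < n \<Longrightarrow> Pp x m (Suc n) = (Aw x n - Bw x n) * Pp x m n"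
  unfolding Pp_def by (subst prod.atLeastLessThan_Suc) (auto simp: mult.commute)

lemma Hs_formula:
  assumes "n \<ge> 1"
  shows "v \<in> {1..n} \<Longrightarrow> Hs x n v = (\<Sum>m<n. of_nat ((v-1) choose (n-1-m)) * Pp x m n * gg x m)"
  using assms
proof (induction n arbitrary: v rule: nat_induct_at_least)
  case base
  then have "v = 1" by auto
  then show ?case using Hs_1[of x] by (simp add: Pp_def gg_def)
next
  case (Suc n)
  note n = Suc.hyps(1)
  have v: "v \<in> {1..Suc n}" using Suc.prems by simp
  let ?A = "Aw x n" and ?B = "Bw x n"
  let ?T = "\<lambda>m. Pp x m n * gg x m"
  have "Hs x (Suc n) v = (\<Sum>u\<in>{1..n}. Hs x n u * (if u < v then ?A else ?B))"
    by (rule Hs_rec[OF v n])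
  also have "\<dots> = (\<Sum>u\<in>{1..n}. Hs x n u * ?B + (if u \<in> {u. u < v} then Hs x n u * (?A - ?B) else 0))"
    by (intro sum.cong refl) (auto simp: algebra_simps)
  also have "\<dots> = ?B * Fs x n + (\<Sum>u\<in>{1..n} \<inter> {u. u < v}. Hs x n u * (?A - ?B))"
    by (simp add: sum.distrib sum.inter_restrict Fs_Hs[OF n] sum_distrib_left mult.commute)
  also have "{1..n} \<inter> {u. u < v} = {1..<v}" using v by auto
  also have "(\<Sum>u\<in>{1..<v}. Hs x n u * (?A - ?B)) =
      (\<Sum>u\<in>{1..<v}. \<Sum>m<n. of_nat ((u-1) choose (n-1-m)) * ?T m) * (?A - ?B)"
  proof -
    have "(\<Sum>u\<in>{1..<v}. Hs x n u) = (\<Sum>u\<in>{1..<v}. \<Sum>m<n. of_nat ((u-1) choose (n-1-m)) * ?T m)"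
      by (rule sum.cong[OF refl], subst Suc.IH) (use v in \<open>auto simp: mult.assoc\<close>)
    then show ?thesis by (simp add: sum_distrib_right[symmetric])
  qed
  also have "(\<Sum>u\<in>{1..<v}. \<Sum>m<n. of_nat ((u-1) choose (n-1-m)) * ?T m) =
      (\<Sum>m<n. of_nat ((v-1) choose (n-m)) * ?T m)"
  proof -
    have "(\<Sum>u\<in>{1..<v}. \<Sum>m<n. of_nat ((u-1) choose (n-1-m)) * ?T m) =
       (\<Sum>m<n. of_nat (\<Sum>u\<in>{1..<v}. ((u-1) choose (n-1-m))) * ?T m)"
      by (subst sum.swap) (simp only: of_nat_sum sum_distrib_right)
    also have "\<dots> = (\<Sum>m<n. of_nat ((v-1) choose (n-m)) * ?T m)"
      by (intro sum.cong refl) (simp only: hockey, simp add: Suc_diff_Suc)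
    finally show ?thesis .
  qed
  finally have L: "Hs x (Suc n) v = ?B * Fs x n + (\<Sum>m<n. of_nat ((v-1) choose (n-m)) * ?T m) * (?A - ?B)" .
  have "(\<Sum>m<Suc n. of_nat ((v-1) choose (Suc n-1-m)) * Pp x m (Suc n) * gg x m) =
      (\<Sum>m<n. of_nat ((v-1) choose (n-m)) * Pp x m (Suc n) * gg x m) + Pp x n (Suc n) * gg x n"
    by simp
  also have "Pp x n (Suc n) * gg x n = ?B * Fs x n" using n by (simp add: Pp_def gg_def)
  also have "(\<Sum>m<n. of_nat ((v-1) choose (n-m)) * Pp x m (Suc n) * gg x m) =
     (\<Sum>m<n. of_nat ((v-1) choose (n-m)) * ?T m) * (?A - ?B)"
    unfolding sum_distrib_right by (intro sum.cong refl) (simp add: Pp_Suc algebra_simps)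
  finally show ?case using L by (simp add: add.commute)
qed

lemma Fs_formula:
  assumes n: "n \<ge> 1"
  shows "Fs x n = (\<Sum>m<n. of_nat (n choose (n-m)) * Pp x m n * gg x m)"
proof -
  have "Fs x n = (\<Sum>v\<in>{1..<Suc n}. \<Sum>m<n. of_nat ((v-1) choose (n-1-m)) * (Pp x m n * gg x m))"
    unfolding Fs_Hs[OF n] by (intro sum.cong) (auto simp: Hs_formula[OF n] mult.assoc)
  also have "\<dots> = (\<Sum>m<n. of_nat (\<Sum>v\<in>{1..<Suc n}. ((v-1) choose (n-1-m))) * (Pp x m n * gg x m))"
    by (subst sum.swap) (simp only: of_nat_sum sum_distrib_right)
  also have "\<dots> = (\<Sum>m<n. of_nat (n choose (n-m)) * Pp x m n * gg x m)"
    by (intro sum.cong refl) (simp only: hockey, simp add: Suc_diff_Suc mult.assoc)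
  finally show ?thesis .
qed



abbreviation p1 :: "int poly" where "p1 \<equiv> [:1, 1:]"

definition R :: "nat \<Rightarrow> int poly \<Rightarrow> int poly" where
  "R N f = (\<Sum>i\<le>N. monom (coeff f i) (N - i))"

lemma R_add: "R N (f + g) = R N f + R N g"
  by (simp add: R_def sum.distrib add_monom[symmetric])

lemma R_sum: "finite S \<Longrightarrow> R N (sum f S) = (\<Sum>s\<in>S. R N (f s))"
proof (induction S rule: finite_induct)
  case empty
  then show ?case by (simp add: R_def)
next
  case (insert x F)
  then show ?case by (simp add: R_add)
qed

lemma R_monom: "e \<le> N \<Longrightarrow> R N (monom 1 e) = monom 1 (N - e)"
proof -
  assume e: "e \<le> N"
  have "R N (monom 1 e) = (\<Sum>i\<le>N. if i = e then monom 1 (N - e) else 0)"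
    unfolding R_def by (intro sum.cong refl) auto
  also have "\<dots> = monom 1 (N - e)" using e by simp
  finally show ?thesis .
qed

lemma pCons0_sum:
  fixes M :: nat and f :: "nat \<Rightarrow> int poly"
  shows "pCons 0 (\<Sum>i\<le>M. f i) = (\<Sum>i\<le>M. pCons 0 (f i))"
proof (induction M)
  case 0
  then show ?case by simp
next
  case (Suc M)
  have "pCons 0 (sum f {..M} + f (Suc M)) = pCons 0 (sum f {..M}) + pCons 0 (f (Suc M))" by simp
  then show ?case using Suc by simp
qed

lemma R_Suc_low: "degree G \<le> M \<Longrightarrow> R (Suc M) G = pCons 0 (R M G)"
proof -
  assume d: "degree G \<le> M"
  have "coeff G (Suc M) = 0" using d by (intro coeff_eq_0) simp
  then have "R (Suc M) G = (\<Sum>i\<le>M. monom (coeff G i) (Suc M - i))"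
    by (simp add: R_def)
  also have "\<dots> = (\<Sum>i\<le>M. pCons 0 (monom (coeff G i) (M - i)))"
    by (intro sum.cong refl) (simp add: Suc_diff_le monom_Suc)
  also have "\<dots> = pCons 0 (R M G)"
    unfolding R_def by (rule pCons0_sum[symmetric])
  finally show ?thesis .
qed


lemma R_Suc_shift: "R (Suc M) (pCons 0 G) = R M G"
  unfolding R_def by (subst sum.atMost_Suc_shift) (simp?)

lemma p1_mult: "p1 * G = G + pCons 0 G"
  by simp

lemma R_p1:
  assumes d: "degree G \<le> M"
  shows "R (Suc M) (p1 * G) = p1 * R M G"
proof -
  have "R (Suc M) (p1 * G) = R (Suc M) G + R (Suc M) (pCons 0 G)" by (simp only: p1_mult R_add)
  also have "\<dots> = pCons 0 (R M G) + R M G" using R_Suc_low[OF d] R_Suc_shift by simp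
  also have "\<dots> = p1 * R M G" by simp
  finally show ?thesis .
qed

lemma degree_p1: "degree (p1 ^ k) = k"
  by (simp add: degree_power_eq)

lemma R_p1pow: "degree G \<le> M \<Longrightarrow> R (k + M) (p1 ^ k * G) = p1 ^ k * R M G"
proof (induction k)
  case 0
  then show ?case by simp
next
  case (Suc k)
  have "degree (p1 ^ k * G) \<le> k + M"
    using degree_mult_le[of "p1 ^ k" G] Suc.prems degree_p1[of k] by simp
  then have "R (Suc (k + M)) (p1 * (p1 ^ k * G)) = p1 * R (k + M) (p1 ^ k * G)"
    by (rule R_p1)
  also have "p1 * R (k + M) (p1 ^ k * G) = p1 * (p1 ^ k * R M G)" using Suc by simp
  finally show ?case by (simp only: power_Suc mult.assoc add_Suc)
qed

lemma poly_ext_sum: "degree (G::int poly) \<le> M \<Longrightarrow> poly G z = (\<Sum>i\<le>M. coeff G i * z ^ i)"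
proof -
  assume d: "degree G \<le> M"
  have "poly G z = (\<Sum>i\<le>degree G. coeff G i * z ^ i)" by (rule poly_altdef)
  also have "\<dots> = (\<Sum>i\<le>M. coeff G i * z ^ i)"
    using d by (intro sum.mono_neutral_left) (auto intro: coeff_eq_0)
  finally show ?thesis .
qed

lemma R_eval: "degree (G::int poly) \<le> M \<Longrightarrow> poly (R M G) (-1) = (-1) ^ M * poly G (-1)"
proof -
  assume d: "degree G \<le> M"
  have "poly (R M G) (-1) = (\<Sum>i\<le>M. coeff G i * (-1) ^ (M - i))"
    by (simp add: R_def poly_sum poly_monom)
  also have "\<dots> = (\<Sum>i\<le>M. (-1) ^ M * (coeff G i * (-1) ^ i))"
    by (intro sum.cong refl) (auto simp: minus_one_power_iff)
  also have "\<dots> = (-1) ^ M * poly G (-1)"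
    by (simp add: poly_ext_sum[OF d] sum_distrib_left)
  finally show ?thesis .
qed

lemma pal_dvd:
  assumes deg: "degree F \<le> N" and pal: "R N F = F" and dv: "p1 ^ k dvd F" and odd: "odd (N - k)"
  shows "p1 ^ Suc k dvd F"
proof -
  obtain G where G: "F = p1 ^ k * G" using dv by (auto elim: dvdE)
  show ?thesis
  proof (cases "G = 0")
    case True
    then show ?thesis using G by simp
  next
    case False
    have "degree F = k + degree G" using G False by (simp add: degree_mult_eq degree_p1)
    then have kN: "k \<le> N" and dG: "degree G \<le> N - k" using deg by auto
    have "R N F = R (k + (N - k)) (p1 ^ k * G)" using G kN by simp
    also have "\<dots> = p1 ^ k * R (N - k) G" by (rule R_p1pow[OF dG])
    finally have "p1 ^ k * R (N - k) G = p1 ^ k * G" using pal G by simp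
    then have GR: "R (N - k) G = G" by simp
    have "poly G (-1) = (-1) ^ (N - k) * poly G (-1)"
      using R_eval[OF dG] GR by simp
    then have "poly G (-1) = 0" using odd by simp
    then have "[:1, 1:] dvd G" using poly_eq_0_iff_dvd[of G "-1"] by simp
    then have "p1 ^ k * p1 dvd p1 ^ k * G" by (rule mult_dvd_mono[OF dvd_refl])
    then show ?thesis using G by (simp only: power_Suc2)
  qed
qed



definition X :: "nat \<Rightarrow> nat \<Rightarrow> int poly" where "X c i = [:0, 1:] ^ (i + c)"
definition ex :: "nat \<Rightarrow> nat \<Rightarrow> (nat \<Rightarrow> nat) \<Rightarrow> nat" where
  "ex c n p = (\<Sum>i\<in>altDes n p. i + c)"
definition Nn :: "nat \<Rightarrow> nat \<Rightarrow> nat" where "Nn c n = (\<Sum>i\<in>{1..n-1}. i + c)"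
definition cmp :: "nat \<Rightarrow> (nat \<Rightarrow> nat) \<Rightarrow> nat \<Rightarrow> nat" where
  "cmp n p i = (if i \<in> {1..n} then Suc n - p i else i)"

lemma W_X: "W (X c) n p = monom 1 (ex c n p)"
  by (simp add: W_def X_def ex_def power_sum[symmetric] monom_altdef)

lemma cmp_permutes:
  assumes p: "p permutes {1..n}"
  shows "cmp n p permutes {1..n}"
proof (rule permI)
  note pf = perm_facts[OF p]
  show "cmp n p i \<in> {1..n}" if "i \<in> {1..n}" for i
    using that pf(1)[of i] by (auto simp: cmp_def)
  show "cmp n p i = i" if "i \<notin> {1..n}" for i
    using that by (auto simp: cmp_def)
  show "inj_on (cmp n p) {1..n}"
  proof (rule inj_onI)
    fix a b assume a: "a \<in> {1..n}" and b: "b \<in> {1..n}" and e: "cmp n p a = cmp n p b"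
    have "p a = p b" using e a b pf(1)[of a] pf(1)[of b] by (auto simp: cmp_def)
    then show "a = b" using pf(3) by (simp add: inj_eq)
  qed
qed

lemma cmp_comp:
  assumes p: "p permutes {1..n}"
  shows "cmp n (cmp n p) = p"
proof
  fix i
  note pf = perm_facts[OF p]
  show "cmp n (cmp n p) i = p i" using pf(1)[of i] pf(2)[of i] by (auto simp: cmp_def)
qed

lemma altDes_comp:
  assumes p: "p permutes {1..n}"
  shows "altDes n (cmp n p) = {1..n-1} - altDes n p"
proof (rule set_eqI)
  fix i
  note pf = perm_facts[OF p]
  show "i \<in> altDes n (cmp n p) \<longleftrightarrow> i \<in> {1..n-1} - altDes n p"
  proof (cases "i \<in> {1..n-1}")
    case True
    then have i1: "i \<in> {1..n}" and i2: "Suc i \<in> {1..n}" by auto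
    have ne: "p i \<noteq> p (Suc i)" using pf(3) by (simp add: inj_eq)
    have "cmp n p i < cmp n p (i+1) \<longleftrightarrow> p (i+1) < p i"
         "cmp n p i > cmp n p (i+1) \<longleftrightarrow> p (i+1) > p i"
      using i1 i2 pf(1)[of i] pf(1)[of "Suc i"] by (auto simp: cmp_def)
    then show ?thesis using True ne by (auto simp: altDes_def)
  next
    case False
    then show ?thesis using altDes_sub[of n "cmp n p"] by auto
  qed
qed

lemma cmp_bij: "bij_betw (cmp n) {p. p permutes {1..n}} {p. p permutes {1..n}}"
proof -
  let ?S = "{p. p permutes {1..n}}"
  have a: "\<forall>p\<in>?S. cmp n (cmp n p) = p" using cmp_comp by blast
  have b: "cmp n ` ?S \<subseteq> ?S" using cmp_permutes by blast
  show ?thesis by (rule bij_betw_byWitness[OF a a b b])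
qed

lemma ex_le: "ex c n p \<le> Nn c n"
  unfolding ex_def Nn_def by (rule sum_mono2) (use altDes_sub[of n p] in auto)

lemma ex_comp:
  assumes p: "p permutes {1..n}"
  shows "ex c n (cmp n p) = Nn c n - ex c n p"
proof -
  have fin: "finite (altDes n p)" using altDes_sub[of n p] finite_subset by blast
  show ?thesis unfolding ex_def Nn_def altDes_comp[OF p]
    by (rule sum_diff_nat[OF fin altDes_sub])
qed

lemma Fs_X: "Fs (X c) n = (\<Sum>p\<in>{p. p permutes {1..n}}. monom 1 (ex c n p))"
  by (simp add: Fs_def W_X)

lemma Fs_pal: "R (Nn c n) (Fs (X c) n) = Fs (X c) n"
proof -
  let ?S = "{p. p permutes {1..n}}"
  have fin: "finite ?S" by (rule finite_permutations) simp
  have "R (Nn c n) (Fs (X c) n) = (\<Sum>p\<in>?S. monom 1 (Nn c n - ex c n p))"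
    unfolding Fs_X R_sum[OF fin] by (intro sum.cong refl) (simp add: R_monom ex_le)
  also have "\<dots> = (\<Sum>p\<in>?S. monom 1 (ex c n (cmp n p)))"
    by (intro sum.cong refl) (simp add: ex_comp)
  also have "\<dots> = (\<Sum>p\<in>?S. monom 1 (ex c n p))"
    by (rule sum.reindex_bij_betw[OF cmp_bij])
  finally show ?thesis unfolding Fs_X .
qed

lemma Fs_deg: "degree (Fs (X c) n) \<le> Nn c n"
  unfolding Fs_X
  by (rule degree_sum_le) (auto intro: order.trans[OF degree_monom_le ex_le] finite_permutations)

lemma p1_dvd_pow: "p1 dvd [:0, 1:] ^ (2 * a) - 1"
proof (induction a)
  case 0
  then show ?case by simp
next
  case (Suc a)
  have e0: "z ^ (2 * Suc a) - 1 = z ^ 2 * (z ^ (2 * a) - 1) + (z ^ 2 - 1)" for z :: "int poly"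
  proof -
    have "z ^ (2 * Suc a) = z ^ 2 * z ^ (2 * a)" by (simp only: mult_Suc_right power_add)
    then show ?thesis by (simp add: algebra_simps)
  qed
  have e: "[:0, 1::int:] ^ (2 * Suc a) - 1 = [:0, 1:] ^ 2 * ([:0, 1:] ^ (2 * a) - 1) + ([:0, 1:] ^ 2 - 1)"
    by (rule e0)
  have fa: "[:0, 1::int:] ^ 2 - 1 = p1 * [:-1, 1:]"
    by (simp add: power2_eq_square one_pCons)
  have "p1 dvd [:0, 1::int:] ^ 2 - 1" unfolding fa by (rule dvd_triv_left)
  then show ?case unfolding e using Suc by (intro dvd_add) simp_all
qed

lemma AB_dvd:
  assumes "even (i + c)"
  shows "p1 dvd Aw (X c) i - Bw (X c) i"
proof -
  obtain a where a: "i + c = 2 * a" using assms by (metis evenE)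
  have d: "p1 dvd X c i - 1" unfolding X_def a by (rule p1_dvd_pow)
  show ?thesis
  proof (cases "even i")
    case True
    then show ?thesis using d by (simp add: Aw_def Bw_def)
  next
    case False
    have "Aw (X c) i - Bw (X c) i = - (X c i - 1)" using False by (simp add: Aw_def Bw_def)
    then show ?thesis using d by (simp only: dvd_minus_iff)
  qed
qed



lemma f1: "even (N::nat) \<Longrightarrow> N \<ge> 1 \<Longrightarrow> N div 2 = Suc ((N - 1) div 2)" by (auto elim!: evenE)
lemma f2: "odd (N::nat) \<Longrightarrow> N div 2 = (N - 1) div 2" by (auto elim!: oddE)
lemma f3: "odd (N::nat) \<Longrightarrow> Suc N div 2 = Suc (N div 2)" by (auto elim!: oddE)
lemma f4: "even (N::nat) \<Longrightarrow> Suc N div 2 = N div 2" by (auto elim!: evenE)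
lemma a1: "m < (N::nat) \<Longrightarrow> even N \<Longrightarrow> N div 2 - m div 2 = Suc ((N - 1) div 2 - m div 2)"
  using f1[of N] div_le_mono[of m "N - 1" 2] by linarith
lemma a2: "m < (N::nat) \<Longrightarrow> odd N \<Longrightarrow> N div 2 - m div 2 = (N - 1) div 2 - m div 2"
  using f2[of N] by simp
lemma a3: "m < (N::nat) \<Longrightarrow> odd N \<Longrightarrow> Suc N div 2 - (m + 1) div 2 = Suc (N div 2 - (m + 1) div 2)"
  using f3[of N] div_le_mono[of "m + 1" N 2] by linarith
lemma a4: "m < (N::nat) \<Longrightarrow> even N \<Longrightarrow> Suc N div 2 - (m + 1) div 2 = N div 2 - (m + 1) div 2"
  using f4[of N] by simp

definition dd :: "nat \<Rightarrow> nat \<Rightarrow> nat" where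
  "dd c n = (if even c then n div 2 else if even n then n div 2 - 1 else n div 2)"
definition ee :: "nat \<Rightarrow> nat \<Rightarrow> nat \<Rightarrow> nat" where
  "ee c m n = (if even c then (n - 1) div 2 - m div 2 else n div 2 - (m + 1) div 2)"

lemma g1: "(n::nat) \<ge> 1 \<Longrightarrow> (n - 1) div 2 = (if even n then n div 2 - 1 else n div 2)"
  by (auto elim!: evenE oddE)
lemma g2: "(m::nat) \<ge> 1 \<Longrightarrow> (m + 1) div 2 = Suc ((m - 1) div 2)"
  by (cases "even m") (auto elim!: evenE oddE)

definition Tt :: "nat \<Rightarrow> nat \<Rightarrow> nat" where
  "Tt c n = (if even c then (n - 1) div 2 else n div 2 - 1)"

lemma b1: "Tt c n \<le> ee c 0 n"
  by (simp add: Tt_def ee_def)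

lemma T_eq1: "n \<ge> 1 \<Longrightarrow> odd (n + c) \<or> n = 1 \<Longrightarrow> Tt c n = dd c n"
proof -
  assume n: "n \<ge> 1" and h: "odd (n + c) \<or> n = 1"
  show ?thesis
  proof (cases "even c")
    case True
    then have "odd n" using h by auto
    then show ?thesis using True g1[of n] n by (simp add: Tt_def dd_def)
  next
    case False
    show ?thesis
    proof (cases "n = 1")
      case True
      then show ?thesis using False by (simp add: Tt_def dd_def)
    next
      case F2: False
      then have "even n" using h False by auto
      then show ?thesis using False by (simp add: Tt_def dd_def)
    qed
  qed
qed

lemma T_eq2: "n \<ge> 1 \<Longrightarrow> \<not> (odd (n + c) \<or> n = 1) \<Longrightarrow> Suc (Tt c n) = dd c n"
proof -
  assume a: "n \<ge> 1" "\<not> (odd (n + c) \<or> n = 1)"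
  then have "n \<ge> 2" by simp
  then have h: "n div 2 \<ge> 1" using div_le_mono[of 2 n 2] by simp
  show ?thesis
  proof (cases "even c")
    case True
    then have "even n" using a by simp
    then show ?thesis using h True g1[of n] a by (simp add: dd_def Tt_def)
  next
    case False
    then have "odd n" using a by simp
    then show ?thesis using h False by (simp add: dd_def Tt_def)
  qed
qed

lemma b2: "1 \<le> m \<Longrightarrow> m < n \<Longrightarrow> Tt c n \<le> ee c m n + dd c m"
proof -
  assume m: "1 \<le> m" "m < n"
  show ?thesis
  proof (cases "even c")
    case True
    have "m div 2 \<le> (n - 1) div 2" using m by (intro div_le_mono) simp
    moreover have "ee c m n = (n - 1) div 2 - m div 2" using True by (simp add: ee_def)
    moreover have "dd c m = m div 2" using True by (simp add: dd_def)
    moreover have "Tt c n = (n - 1) div 2" using True by (simp add: Tt_def)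
    ultimately show ?thesis by linarith
  next
    case False
    have le: "(m + 1) div 2 \<le> n div 2" using m by (intro div_le_mono) simp
    have d: "dd c m = (m - 1) div 2" using False g1[of m] m by (simp add: dd_def)
    have e: "ee c m n = n div 2 - (m + 1) div 2" using False by (simp add: ee_def)
    have T': "Tt c n = n div 2 - 1" using False by (simp add: Tt_def)
    have g: "(m + 1) div 2 = Suc ((m - 1) div 2)" using g2[of m] m by simp
    show ?thesis unfolding d e T' using g le by linarith
  qed
qed


lemma ee_step: "m < N \<Longrightarrow> ee c m (Suc N) = (if even (N + c) then Suc (ee c m N) else ee c m N)"
  by (cases "even c"; cases "even N") (simp_all add: ee_def a1 a2 a3 a4)

lemma Pp_dvd_aux: "p1 ^ ee c m (Suc m + k) dvd Pp (X c) m (Suc m + k)"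
proof (induction k)
  case 0
  then show ?case by (simp add: Pp_def ee_def)
next
  case (Suc k)
  let ?n = "Suc m + k"
  have P: "Pp (X c) m (Suc ?n) = (Aw (X c) ?n - Bw (X c) ?n) * Pp (X c) m ?n"
    by (rule Pp_Suc) simp
  show ?case
  proof (cases "even (?n + c)")
    case True
    have E: "ee c m (Suc ?n) = Suc (ee c m ?n)" using True ee_step[of m ?n c] by simp
    have "p1 * p1 ^ ee c m ?n dvd (Aw (X c) ?n - Bw (X c) ?n) * Pp (X c) m ?n"
      by (rule mult_dvd_mono[OF AB_dvd[OF True] Suc.IH])
    then show ?thesis by (simp only: add_Suc_right E P power_Suc)
  next
    case False
    have "ee c m (Suc ?n) = ee c m ?n" using False ee_step[of m ?n c] by simp
    then show ?thesis using P Suc.IH by simp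
  qed
qed

lemma Pp_dvd: "m < n \<Longrightarrow> p1 ^ ee c m n dvd Pp (X c) m n"
  using Pp_dvd_aux[of c m "n - Suc m"] by simp

lemma sum_id_2: "2 * (\<Sum>i\<in>{1..m::nat}. i) = m * Suc m"
  by (induction m) simp_all

lemma odd_aux: "(even (N::nat) \<longleftrightarrow> even a) \<Longrightarrow> a \<le> N \<Longrightarrow> 1 \<le> a \<Longrightarrow> odd (N - (a - 1))"
  by presburger

lemma parity:
  assumes n: "n \<ge> 2" and e: "even (n + c)"
  shows "odd (Nn c n - (dd c n - 1))"
proof -
  define S where "S = (\<Sum>i\<in>{1..n-1}. i)"
  have N: "Nn c n = S + (n - 1) * c" by (simp add: Nn_def sum.distrib S_def)
  have S2: "2 * S = (n - 1) * n" using sum_id_2[of "n - 1"] n by (simp add: S_def)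
  obtain a where A: "(even (Nn c n) \<longleftrightarrow> even a)" "a \<le> Nn c n" "1 \<le> a" "dd c n = a"
  proof (cases "even c")
    case True
    then obtain a where ne: "n = 2 * a" using e by (metis evenE even_add)
    have "2 * S = 2 * ((2 * a - 1) * a)" using S2 ne by (simp add: mult.commute mult.left_commute)
    then have S: "S = (2 * a - 1) * a" by simp
    have a1: "1 \<le> a" using n ne by simp
    have o: "odd (2 * a - 1)" using a1 by presburger
    have p1': "even S \<longleftrightarrow> even a" using o S by (simp add: even_mult_iff)
    have p2: "even ((n - 1) * c)" using True by simp
    have le: "a \<le> S" unfolding S using a1 by simp
    have d: "dd c n = a" using True ne by (simp add: dd_def)
    show ?thesis
    proof (rule that[of a])
      show "even (Nn c n) \<longleftrightarrow> even a" unfolding N using p1' p2 by simp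
      show "a \<le> Nn c n" unfolding N using le by simp
    qed (use a1 d in auto)
  next
    case False
    then have "odd n" using e by simp
    then obtain a where ne: "n = 2 * a + 1" by (metis oddE)
    have "2 * S = 2 * (a * (2 * a + 1))" using S2 ne by (simp add: mult.commute mult.left_commute)
    then have S: "S = a * (2 * a + 1)" by simp
    have a1: "1 \<le> a" using n ne by simp
    have p1': "even S \<longleftrightarrow> even a" using S by (simp add: even_mult_iff)
    have p2: "even ((n - 1) * c)" using ne by simp
    have le: "a \<le> S" unfolding S by simp
    have d: "dd c n = a" using False ne by (simp add: dd_def)
    show ?thesis
    proof (rule that[of a])
      show "even (Nn c n) \<longleftrightarrow> even a" unfolding N using p1' p2 by simp
      show "a \<le> Nn c n" unfolding N using le by simp
    qed (use a1 d in auto)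
  qed
  then show ?thesis using odd_aux[OF A(1-3)] by simp
qed



lemma main_dvd: "n \<ge> 1 \<Longrightarrow> p1 ^ dd c n dvd Fs (X c) n"
proof (induction n rule: less_induct)
  case (less n)
  define T where "T = Tt c n"
  have terms: "p1 ^ T dvd of_nat (n choose (n - m)) * Pp (X c) m n * gg (X c) m" if m: "m < n" for m
  proof (cases "m = 0")
    case True
    have "T \<le> ee c 0 n" unfolding T_def by (rule b1)
    then have "p1 ^ T dvd p1 ^ ee c 0 n" by (rule le_imp_power_dvd)
    also have "\<dots> dvd Pp (X c) 0 n" using Pp_dvd[of 0 n c] less.prems by simp
    finally have "p1 ^ T dvd Pp (X c) 0 n" .
    then show ?thesis using True by (simp add: gg_def)
  next
    case False
    then have m1: "m \<ge> 1" by simp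
    have "p1 ^ dd c m dvd Fs (X c) m" using less.IH[OF m m1] .
    then have g: "p1 ^ dd c m dvd gg (X c) m" using False by (simp add: gg_def)
    have "T \<le> ee c m n + dd c m" unfolding T_def using m m1 by (intro b2)
    then have "p1 ^ T dvd p1 ^ (ee c m n + dd c m)" by (rule le_imp_power_dvd)
    also have "\<dots> = p1 ^ ee c m n * p1 ^ dd c m" by (rule power_add)
    also have "\<dots> dvd Pp (X c) m n * gg (X c) m" using Pp_dvd[OF m] g by (rule mult_dvd_mono)
    finally have "p1 ^ T dvd Pp (X c) m n * gg (X c) m" .
    then show ?thesis by (simp add: mult.assoc)
  qed
  have T: "p1 ^ T dvd Fs (X c) n"
    unfolding Fs_formula[OF less.prems] by (rule dvd_sum) (use terms in simp)
  show ?case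
  proof (cases "odd (n + c) \<or> n = 1")
    case True
    then show ?thesis using T T_eq1[OF less.prems True] by (simp add: T_def)
  next
    case False
    then have n2: "n \<ge> 2" and ev: "even (n + c)" using less.prems by auto
    have Td: "Suc T = dd c n" unfolding T_def by (rule T_eq2[OF less.prems False])
    have e: "dd c n - 1 = T" using Td by simp
    have "odd (Nn c n - T)" using parity[OF n2 ev] unfolding e .
    then have "p1 ^ Suc T dvd Fs (X c) n"
      by (rule pal_dvd[OF Fs_deg Fs_pal T])
    then show ?thesis using Td by simp
  qed
qed

lemma altA_Fs: "altA n ([:0, 1:] ^ c) [:0, 1::int:] = Fs (X c) n"
proof -
  have "([:0, 1:] ^ c) ^ altdes n p * [:0, 1::int:] ^ altmaj n p = W (X c) n p" for p
  proof -
    have "W (X c) n p = [:0, 1:] ^ (\<Sum>i\<in>altDes n p. i + c)"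
      by (simp add: W_def X_def power_sum[symmetric])
    also have "(\<Sum>i\<in>altDes n p. i + c) = c * altdes n p + altmaj n p"
      by (simp add: sum.distrib altmaj_def altdes_def mult.commute add.commute)
    also have "[:0, 1::int:] ^ (c * altdes n p + altmaj n p) = ([:0, 1:] ^ c) ^ altdes n p * [:0, 1::int:] ^ altmaj n p"
      by (simp only: power_add power_mult)
    finally show ?thesis by simp
  qed
  then show ?thesis by (simp add: altA_def Fs_def)
qed

theorem theorem4p5:
  fixes n j :: nat
  assumes "n \<ge> 1"
  defines "q \<equiv> [:0, 1:] :: int poly"
  shows "(even n \<longrightarrow>
            (even j \<longrightarrow> (1 + q) ^ (n div 2) dvd altA n (q ^ j) q) \<and>
            (odd j \<longrightarrow> (1 + q) ^ ((n - 1) div 2) dvd altA n (q ^ j) q)) \<and>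
         (odd n \<longrightarrow> (1 + q) ^ (n div 2) dvd altA n (q ^ j) q) \<and>
         (1 + q) ^ (n div 2) dvd altA n 1 q"
proof -
  have q1: "1 + q = p1" unfolding q_def by (simp add: one_pCons)
  have M: "p1 ^ dd c n dvd altA n (q ^ c) q" for c
    unfolding q_def altA_Fs using main_dvd[OF assms(1)] .
  have A: "even n \<longrightarrow> even j \<longrightarrow> (1 + q) ^ (n div 2) dvd altA n (q ^ j) q"
  proof (intro impI)
    assume "even n" "even j"
    then have "dd j n = n div 2" by (simp add: dd_def)
    then show "(1 + q) ^ (n div 2) dvd altA n (q ^ j) q" using M[of j] q1 by simp
  qed
  have B: "even n \<longrightarrow> odd j \<longrightarrow> (1 + q) ^ ((n - 1) div 2) dvd altA n (q ^ j) q"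
  proof (intro impI)
    assume "even n" "odd j"
    then have "dd j n = (n - 1) div 2" using g1[of n] assms(1) by (simp add: dd_def)
    then show "(1 + q) ^ ((n - 1) div 2) dvd altA n (q ^ j) q" using M[of j] q1 by simp
  qed
  have C: "odd n \<longrightarrow> (1 + q) ^ (n div 2) dvd altA n (q ^ j) q"
  proof (intro impI)
    assume "odd n"
    then have "dd j n = n div 2" by (simp add: dd_def)
    then show "(1 + q) ^ (n div 2) dvd altA n (q ^ j) q" using M[of j] q1 by simp
  qed
  have D: "(1 + q) ^ (n div 2) dvd altA n 1 q"
    using M[of 0] by (simp add: q1 dd_def)
  show ?thesis using A B C D by blast
qed

end
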